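(* Suppose the density $f$ is unimodal and the noise has a unimodal failure rate; let $r^*_0\in\arg\max\{B_r/r:1\le r\le n-1\}$ and $\hat r=\max\{r:\beta_r>0\}$. Let $M^*(\theta)=\max_{{\bf v}\in\mathcal V}M({\bf v},\theta)=\max_{1\le r\le n-1}A_r(\theta)$ and let $x^{**}(\theta)$ be the equilibrium effort under optimal prizes, i.e. $c'(x^{**}(\theta))=M^*(\theta)$. Then: (i) If $\hat r\le\lfloor n/2\rfloor$, then $M^*(\theta)$, and hence $x^{**}(\theta)$, is nonincreasing in $\theta\in[0,1]$. (ii) If $r^*_0>\lceil n/2\rceil$, then $M^*(\theta)$, and hence $x^{**}(\theta)$, is increasing in $\theta\in[0,1]$. (iii) If $\hat r>\lceil n/2\rceil$, then there exists $\bar\theta<1$ such that $M^*(\theta)$, and hence $x^{**}(\theta)$, is increasing in $\theta$ on $[\bar\theta,1]$.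
   Context: Fix an integer $n\ge 2$ and a noise distribution with cdf $F$ and density $f$ on $\mathbb R$ (integrals finite). For $r=1,\dots,n$ let $g_r(u)=u^{n-r}(1-u)^{r-1}$ and $\beta_r=\binom{n-1}{r-1}\int g_r'(F(t))f(t)^2dt$; $B_r=\sum_{k=1}^r\beta_k$, which for $1\le r\le n-1$ equals $r\binom{n-1}{r}\int F(t)^{n-1-r}[1-F(t)]^{r-1}f(t)^2dt>0$. Let $\mathcal V=\{{\bf v}\in\mathbb R^n: v_1\ge\dots\ge v_n\ge 0,\ \sum_r v_r=1\}$, $R({\bf v})=\sum_r\beta_rv_r$, $L({\bf v})=-\frac1n\sum_{r=1}^n\sum_{s<r}(\beta_r+\beta_s)(v_s-v_r)$, $M({\bf v},\theta)=R({\bf v})+\theta L({\bf v})$ for $\theta\in[0,1]$, and $A_r(\theta)=\big[1+\theta\big(\frac{2r}{n}-1\big)\big]\frac{B_r}{r}$ for $1\le r\le n-1$. The effort cost $c$ is strictly increasing, differentiable and strictly convex on $[0,\bar x]$, $\bar x=c^{-1}(1)$, with $c(0)=c'(0)=0$. The failure rate is $h=f/(1-F)$; a function is unimodal if it is (weakly) first increasing then decreasing (monotone functions included); the noise has a unimodal failure rate if $h$ is unimodal. *)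

theory Defs
  imports "HOL-Analysis.Analysis"
begin

definition gfun :: "nat \<Rightarrow> nat \<Rightarrow> real \<Rightarrow> real" where
  "gfun n r u = u ^ (n - r) * (1 - u) ^ (r - 1)"

definition beta :: "nat \<Rightarrow> (real \<Rightarrow> real) \<Rightarrow> (real \<Rightarrow> real) \<Rightarrow> nat \<Rightarrow> real" where
  "beta n F f r = real ((n - 1) choose (r - 1)) *
     (LINT t|lborel. deriv (gfun n r) (F t) * (f t)\<^sup>2)"

definition Bsum :: "nat \<Rightarrow> (real \<Rightarrow> real) \<Rightarrow> (real \<Rightarrow> real) \<Rightarrow> nat \<Rightarrow> real" where
  "Bsum n F f r = (\<Sum>k=1..r. beta n F f k)"

text \<open>Vectors v in R^n are functions nat => real, only the entries 1..n matter.\<close>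
definition Vset :: "nat \<Rightarrow> (nat \<Rightarrow> real) set" where
  "Vset n = {v. (\<forall>r\<in>{1..<n}. v (r + 1) \<le> v r) \<and> 0 \<le> v n \<and> (\<Sum>r=1..n. v r) = 1}"

definition Rfun :: "nat \<Rightarrow> (real \<Rightarrow> real) \<Rightarrow> (real \<Rightarrow> real) \<Rightarrow> (nat \<Rightarrow> real) \<Rightarrow> real" where
  "Rfun n F f v = (\<Sum>r=1..n. beta n F f r * v r)"

definition Lfun :: "nat \<Rightarrow> (real \<Rightarrow> real) \<Rightarrow> (real \<Rightarrow> real) \<Rightarrow> (nat \<Rightarrow> real) \<Rightarrow> real" where
  "Lfun n F f v = - (1 / real n) *
     (\<Sum>r=1..n. \<Sum>s\<in>{1..<r}. (beta n F f r + beta n F f s) * (v s - v r))"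

definition Mfun :: "nat \<Rightarrow> (real \<Rightarrow> real) \<Rightarrow> (real \<Rightarrow> real) \<Rightarrow> (nat \<Rightarrow> real) \<Rightarrow> real \<Rightarrow> real" where
  "Mfun n F f v \<theta> = Rfun n F f v + \<theta> * Lfun n F f v"

definition Mstar :: "nat \<Rightarrow> (real \<Rightarrow> real) \<Rightarrow> (real \<Rightarrow> real) \<Rightarrow> real \<Rightarrow> real" where
  "Mstar n F f \<theta> = (SUP v\<in>Vset n. Mfun n F f v \<theta>)"

definition Afun :: "nat \<Rightarrow> (real \<Rightarrow> real) \<Rightarrow> (real \<Rightarrow> real) \<Rightarrow> nat \<Rightarrow> real \<Rightarrow> real" where
  "Afun n F f r \<theta> = (1 + \<theta> * (2 * real r / real n - 1)) * (Bsum n F f r / real r)"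

definition unimodal_on :: "real set \<Rightarrow> (real \<Rightarrow> real) \<Rightarrow> bool" where
  "unimodal_on S h \<longleftrightarrow>
     (\<exists>m. (\<forall>x\<in>S. \<forall>y\<in>S. x \<le> y \<and> y \<le> m \<longrightarrow> h x \<le> h y) \<and>
          (\<forall>x\<in>S. \<forall>y\<in>S. m \<le> x \<and> x \<le> y \<longrightarrow> h y \<le> h x))
     \<or> mono_on S h \<or> antimono_on S h"

definition failure_rate :: "(real \<Rightarrow> real) \<Rightarrow> (real \<Rightarrow> real) \<Rightarrow> real \<Rightarrow> real" where
  "failure_rate F f t = f t / (1 - F t)"

definition strictly_convex_on :: "real set \<Rightarrow> (real \<Rightarrow> real) \<Rightarrow> bool" where
  "strictly_convex_on S c \<longleftrightarrow>
     (\<forall>x\<in>S. \<forall>y\<in>S. \<forall>t::real. x \<noteq> y \<and> 0 < t \<and> t < 1 \<longrightarrow>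
        c ((1 - t) * x + t * y) < (1 - t) * c x + t * c y)"

end

theory Submission
  imports Defs "HOL-Probability.Probability"
begin


definition dg :: "nat \<Rightarrow> nat \<Rightarrow> real \<Rightarrow> real" where
  "dg n r u = real (n-r) * u^(n-r-1) * (1-u)^(r-1) - real (r-1) * u^(n-r) * (1-u)^(r-2)"

lemma gfun_deriv: "(gfun n r has_real_derivative dg n r u) (at u)"
  unfolding gfun_def dg_def
  by (auto intro!: derivative_eq_intros simp: algebra_simps numeral_2_eq_2)

lemma deriv_gfun: "deriv (gfun n r) = dg n r"
  by (rule ext, rule DERIV_imp_deriv, rule gfun_deriv)

lemma Pid: "i \<le> N \<Longrightarrow> (\<Sum>k=1..i+1. real ((N+1) choose (k-1)) * dg (N+2) k u)
   = real (N+1) * real (N choose i) * u^(N-i) * (1-u)^i"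
proof (induction i)
  case 0
  then show ?case by (simp add: dg_def)
next
  case (Suc i)
  then obtain p where N: "N = i+1+p" by (metis add.commute le_Suc_ex Suc_eq_plus1 add.assoc Suc_le_eq less_eq_Suc_le)
  have c1: "real ((N+1) choose (i+1)) * real (i+1) = real (N+1) * real (N choose i)"
    using Suc_times_binomial_eq[of N i] by (metis Suc_eq_plus1 of_nat_mult mult.commute)
  have c2: "real ((N+1) choose (i+1)) * real (p+1) = real (N+1) * real (N choose (i+1))"
  proof -
    have "(N+1 - (i+1)) * ((N+1) choose (i+1)) = (N+1) * ((N+1-1) choose (i+1))"
      by (rule binomial_absorb_comp)
    moreover have "N+1-(i+1) = p+1" using N by simp
    ultimately show ?thesis by (metis add_diff_cancel_right' of_nat_mult mult.commute)
  qed
  have "(\<Sum>k=1..Suc i+1. real ((N+1) choose (k-1)) * dg (N+2) k u)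
      = (\<Sum>k=1..i+1. real ((N+1) choose (k-1)) * dg (N+2) k u)
        + real ((N+1) choose (i+1)) * dg (N+2) (i+2) u" by simp
  also have "\<dots> = real (N+1) * real (N choose i) * u^(p+1) * (1-u)^i
        + real ((N+1) choose (i+1)) * (real (p+1) * u^p * (1-u)^(i+1) - real (i+1) * u^(p+1) * (1-u)^i)"
    using Suc N by (simp add: dg_def)
  also have "\<dots> = real ((N+1) choose (i+1)) * real (p+1) * u^p * (1-u)^(i+1)
       + (real (N+1) * real (N choose i) - real ((N+1) choose (i+1)) * real (i+1)) * u^(p+1) * (1-u)^i"
    by (simp add: algebra_simps)
  also have "\<dots> = real (N+1) * real (N choose Suc i) * u^(N - Suc i) * (1-u)^(Suc i)"
    using c1 c2 N by simp
  finally show ?case .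
qed

lemma Bn_id: "(\<Sum>k=1..N+2. real ((N+1) choose (k-1)) * dg (N+2) k u) = 0"
proof -
  have "(\<Sum>k=1..N+2. real ((N+1) choose (k-1)) * dg (N+2) k u)
     = (\<Sum>k=1..N+1. real ((N+1) choose (k-1)) * dg (N+2) k u) + real ((N+1) choose (N+1)) * dg (N+2) (N+2) u"
    by (simp add: numeral_2_eq_2)
  also have "\<dots> = 0" using Pid[of N N u] by (simp add: dg_def numeral_2_eq_2)
  finally show ?thesis .
qed

lemma Psum_id: "(\<Sum>i=0..N. real (N+1) * real (N choose i) * u^(N-i) * (1-u)^i) = real (N+1)"
proof -
  have "(\<Sum>i=0..N. real (N+1) * real (N choose i) * u^(N-i) * (1-u)^i)
      = real (N+1) * (\<Sum>i\<le>N. real (N choose i) * (1-u)^i * u^(N-i))"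
    by (simp add: sum_distrib_left atLeast0AtMost algebra_simps)
  also have "\<dots> = real (N+1) * ((1-u) + u)^N" by (simp only: binomial_ring)
  finally show ?thesis by simp
qed


lemma int_lower:
  fixes f :: "real \<Rightarrow> real"
  assumes "integrable lborel f" "\<And>t. 0 \<le> f t" "0 \<le> K" "\<And>t. t \<in> {a..a+K} \<Longrightarrow> c \<le> f t" "0 \<le> c"
  shows "c * K \<le> (LINT t|lborel. f t)"
proof -
  have "(LINT t|lborel. c * indicator {a..a+K} t) \<le> (LINT t|lborel. f t)"
    using assms by (intro integral_mono) (auto split: split_indicator)
  moreover have "(LINT t|lborel. c * indicator {a..a+K} t) = c * K"
    using assms by simp
  ultimately show ?thesis using assms by (simp split: if_splits)
qed

lemma mode_exists:
  fixes f :: "real \<Rightarrow> real"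
  assumes um: "unimodal_on UNIV f" and int: "integrable lborel f" and nn: "\<And>t. 0 \<le> f t"
    and tot: "(LINT t|lborel. f t) = 1"
  shows "\<exists>m. (\<forall>x y. x \<le> y \<and> y \<le> m \<longrightarrow> f x \<le> f y) \<and> (\<forall>x y. m \<le> x \<and> x \<le> y \<longrightarrow> f y \<le> f x)"
proof -
  obtain t0 where t0: "0 < f t0"
  proof (rule ccontr)
    assume "\<not> thesis"
    have "f t = 0" for t
    proof -
      have "\<not> 0 < f t" using that \<open>\<not> thesis\<close> by blast
      then show ?thesis using nn[of t] by simp
    qed
    then have "(LINT t|lborel. f t) = 0" by simp
    with tot show False by simp
  qed
  let ?K = "2 / f t0"
  have K: "0 \<le> ?K" using t0 by simp
  have ck: "f t0 * ?K = 2" using t0 by simp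
  show ?thesis
  proof -
    { assume "mono_on UNIV f"
      then have "\<And>t. t \<in> {t0..t0+?K} \<Longrightarrow> f t0 \<le> f t" by (auto simp: mono_on_def)
      from int_lower[OF int nn K this] t0 ck tot have False by simp }
    moreover
    { assume "antimono_on UNIV f"
      then have "\<And>t. t \<in> {(t0-?K)..(t0-?K)+?K} \<Longrightarrow> f t0 \<le> f t" by (auto simp: monotone_on_def)
      from int_lower[OF int nn K, of "t0 - ?K" "f t0", OF this] t0 ck tot have False by simp }
    ultimately show ?thesis using um unfolding unimodal_on_def by auto
  qed
qed

locale dens =
  fixes f F :: "real \<Rightarrow> real" and m :: real
  assumes f_meas: "f \<in> borel_measurable lborel"
    and f_nonneg: "\<And>t. 0 \<le> f t"
    and f_int: "integrable lborel f"
    and f_total: "(LINT t|lborel. f t) = 1"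
    and F_cdf: "\<And>x. F x = (LINT t:{..x}|lborel. f t)"
    and up: "\<And>x y. x \<le> y \<Longrightarrow> y \<le> m \<Longrightarrow> f x \<le> f y"
    and down: "\<And>x y. m \<le> x \<Longrightarrow> x \<le> y \<Longrightarrow> f y \<le> f x"
begin

lemma f_le_fm: "f t \<le> f m"
  by (cases "t \<le> m") (auto intro: up down)

definition M where "M = density lborel (\<lambda>t. ennreal (f t))"

lemma sets_M[simp]: "sets M = sets borel" by (simp add: M_def)
lemma space_M[simp]: "space M = UNIV" by (simp add: M_def)

lemma integral_M: "g \<in> borel_measurable borel \<Longrightarrow> (LINT t|M. g t) = (LINT t|lborel. f t * g t)"
  unfolding M_def using f_meas f_nonneg by (subst integral_real_density) auto

lemma emeasure_M_UNIV: "emeasure M UNIV = 1"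
proof -
  have "emeasure M UNIV = (\<integral>\<^sup>+t. ennreal (f t) \<partial>lborel)"
    unfolding M_def using f_meas by (subst emeasure_density) auto
  also have "\<dots> = ennreal (LINT t|lborel. f t)"
    using f_int f_nonneg by (intro nn_integral_eq_integral) auto
  finally show ?thesis using f_total by simp
qed

lemma realdist: "real_distribution M"
proof -
  interpret prob_space M by (rule prob_spaceI) (simp add: emeasure_M_UNIV)
  show ?thesis by unfold_locales simp
qed

interpretation R: real_distribution M by (rule realdist)

lemma measure_M: "A \<in> sets borel \<Longrightarrow> measure M A = (LINT t|lborel. f t * indicator A t)"
proof -
  assume A: "A \<in> sets borel"
  have "measure M A = (LINT t|M. indicator A t)"
    using A by (simp add: R.emeasure_eq_measure)
  also have "\<dots> = (LINT t|lborel. f t * indicator A t)"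
    using A by (intro integral_M) auto
  finally show ?thesis .
qed

lemma F_eq_cdf: "F x = cdf M x"
  unfolding cdf_def2 F_cdf set_lebesgue_integral_def
  by (subst measure_M) (auto simp: mult.commute)

lemma F_mono: "x \<le> y \<Longrightarrow> F x \<le> F y"
  by (simp add: F_eq_cdf R.cdf_nondecreasing)

lemma F_nonneg: "0 \<le> F x" by (simp add: F_eq_cdf R.cdf_nonneg)
lemma F_le1: "F x \<le> 1" by (simp add: F_eq_cdf R.cdf_bounded_prob)

lemma F_cont: "isCont F x"
proof -
  have "measure M {x} = (LINT t|lborel. f t * indicator {x} t)" by (rule measure_M) auto
  also have "\<dots> = 0"
  proof -
    have "AE t in lborel. f t * indicator {x} t = 0"
      using AE_lborel_singleton[of x] by eventually_elim (auto split: split_indicator)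
    then show ?thesis by (simp add: integral_cong_AE integral_eq_zero_AE)
  qed
  finally have "isCont (cdf M) x" by (simp add: R.isCont_cdf)
  moreover have "F = cdf M" using F_eq_cdf by auto
  ultimately show ?thesis by simp
qed

lemma F_contin: "continuous_on S F"
  using F_cont by (simp add: continuous_at_imp_continuous_on)

lemma F_meas[measurable]: "F \<in> borel_measurable borel"
  using F_contin[of UNIV] by (simp add: borel_measurable_continuous_onI)

lemma F_top: "(F \<longlongrightarrow> 1) at_top"
  using R.cdf_lim_at_top_prob F_eq_cdf by (metis ext)
lemma F_bot: "(F \<longlongrightarrow> 0) at_bot"
  using R.cdf_lim_at_bot F_eq_cdf by (metis ext)

end


definition U2 :: "real measure" where "U2 = density lborel (\<lambda>x. ennreal (indicator {0..1::real} x))"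

lemma integral_U2: "(h::real\<Rightarrow>real) \<in> borel_measurable borel \<Longrightarrow> (LINT u|U2. h u) = (LINT u|lborel. indicator {0..1} u * h u)"
proof -
  assume h: "h \<in> borel_measurable borel"
  have "integral\<^sup>L (density lborel (\<lambda>x. ennreal (indicator {0..1::real} x))) h = (LINT u|lborel. indicator {0..1} u * h u)"
    by (rule integral_real_density) (use h in auto)
  then show ?thesis unfolding U2_def .
qed

lemma realdist_U2: "real_distribution U2"
proof -
  have "emeasure U2 UNIV = emeasure lborel {0..1::real}"
    unfolding U2_def by (subst emeasure_density) (auto simp: ennreal_indicator)
  then have e: "emeasure U2 UNIV = 1" by simp
  have sp: "space U2 = UNIV" by (simp add: U2_def)
  interpret prob_space U2 by (rule prob_spaceI) (use e sp in simp)
  show ?thesis by unfold_locales (simp add: U2_def)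
qed

lemma cdf_U2: "cdf U2 y = max 0 (min 1 y)"
proof -
  interpret R: real_distribution U2 by (rule realdist_U2)
  have "cdf U2 y = (LINT t|U2. indicator {..y} t)"
    by (simp add: cdf_def2 R.emeasure_eq_measure)
  also have "\<dots> = (LINT t|lborel. indicator {0..1} t * indicator {..y} t)"
    by (rule integral_U2) auto
  also have "\<dots> = (LINT t|lborel. indicator {0..min 1 y} t)"
    by (intro Bochner_Integration.integral_cong) (auto split: split_indicator)
  also have "\<dots> = max 0 (min 1 y)" by simp
  finally show ?thesis .
qed

context dens begin

interpretation R: real_distribution M by (rule realdist)

lemma measure_F_le: "measure M {t. F t \<le> y} = max 0 (min 1 y)"
proof -
  consider "y < 0" | "1 \<le> y" | "0 \<le> y" "y < 1" by linarith
  then show ?thesis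
  proof cases
    case 1
    then have "{t. F t \<le> y} = {}" by (auto dest!: order.trans[OF F_nonneg])
    then show ?thesis using 1 by simp
  next
    case 2
    then have "{t. F t \<le> y} = UNIV" using F_le1 by (auto intro: order.trans)
    then show ?thesis using 2 R.prob_space by simp
  next
    case 3
    obtain T where T: "\<And>t. T \<le> t \<Longrightarrow> y < F t"
      using order_tendstoD(1)[OF F_top \<open>y < 1\<close>] by (auto simp: eventually_at_top_linorder)
    show ?thesis
    proof (cases "\<exists>s0. F s0 \<le> y")
      case True
      then obtain s0 where s0: "F s0 \<le> y" by auto
      have s0T: "s0 \<le> T" using T[of s0] s0 by (cases "T \<le> s0") auto
      obtain \<tau> where tau: "F \<tau> = y" using IVT'[of F s0 y T] s0 s0T T[of T] F_contin by auto
      let ?S = "{t. F t \<le> y}"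
      have cl: "closed ?S" by (rule closed_Collect_le) (auto intro: F_contin)
      have bdd: "bdd_above ?S" unfolding bdd_above_def
        using T by (metis linorder_not_le mem_Collect_eq not_less_iff_gr_or_eq order.strict_implies_order)
      have ne: "?S \<noteq> {}" using tau by auto
      define \<sigma> where "\<sigma> = Sup ?S"
      have sS: "\<sigma> \<in> ?S" unfolding \<sigma>_def by (rule closed_contains_Sup[OF ne bdd cl])
      have "\<tau> \<le> \<sigma>" unfolding \<sigma>_def using tau bdd by (auto intro: cSup_upper)
      then have Fs: "F \<sigma> = y" using sS tau F_mono[of \<tau> \<sigma>] by auto
      have Seq: "?S = {..\<sigma>}"
      proof
        show "?S \<subseteq> {..\<sigma>}" unfolding \<sigma>_def using bdd by (auto intro: cSup_upper)
        show "{..\<sigma>} \<subseteq> ?S" using Fs F_mono by auto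
      qed
      have "measure M {..\<sigma>} = F \<sigma>" by (simp add: F_eq_cdf cdf_def2)
      then show ?thesis using Seq Fs 3 by simp
    next
      case False
      have "y \<le> 0"
      proof (rule ccontr)
        assume "\<not> y \<le> 0"
        then have "0 < y" by simp
        from order_tendstoD(2)[OF F_bot this] obtain t where "F t < y"
          by (auto simp: eventually_at_bot_linorder)
        with False show False using less_imp_le by blast
      qed
      then have "y = 0" using 3 by simp
      moreover have "{t. F t \<le> y} = {}" using False by auto
      ultimately show ?thesis by simp
    qed
  qed
qed

lemma F_rv: "F \<in> M \<rightarrow>\<^sub>M borel"
  using F_meas by (simp add: measurable_def)

lemma PIT: "distr M borel F = U2"
proof (rule cdf_unique)
  show "real_distribution (distr M borel F)" using F_rv by (rule R.real_distribution_distr)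
  show "real_distribution U2" by (rule realdist_U2)
  show "cdf (distr M borel F) = cdf U2"
  proof
    fix y
    have "cdf (distr M borel F) y = measure M (F -` {..y} \<inter> space M)"
      unfolding cdf_def2 using F_rv by (subst measure_distr) auto
    also have "F -` {..y} \<inter> space M = {t. F t \<le> y}" by auto
    finally show "cdf (distr M borel F) y = cdf U2 y" using measure_F_le cdf_U2 by simp
  qed
qed

lemma PIT_int: "(h::real\<Rightarrow>real) \<in> borel_measurable borel \<Longrightarrow>
   (LINT t|lborel. f t * h (F t)) = (LINT u|lborel. indicator {0..1} u * h u)"
proof -
  assume h: "h \<in> borel_measurable borel"
  have "(LINT t|lborel. f t * h (F t)) = (LINT t|M. h (F t))"
    using h by (subst integral_M) auto
  also have "\<dots> = (LINT u|distr M borel F. h u)"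
    using h F_rv by (subst integral_distr) auto
  also have "\<dots> = (LINT u|lborel. indicator {0..1} u * h u)"
    unfolding PIT using h by (rule integral_U2)
  finally show ?thesis .
qed

end


context dens begin

lemma f_meas'[measurable]: "f \<in> borel_measurable borel"
  using f_meas by simp

lemma int_fq: assumes q: "(q::real\<Rightarrow>real) \<in> borel_measurable borel" and K: "\<And>t. \<bar>q t\<bar> \<le> K"
  shows "integrable lborel (\<lambda>t. f t * q t)"
proof (rule Bochner_Integration.integrable_bound)
  show "integrable lborel (\<lambda>t. K * f t)" using f_int by simp
  show "(\<lambda>t. f t * q t) \<in> borel_measurable lborel" using q by simp
  show "AE t in lborel. norm (f t * q t) \<le> norm (K * f t)"
  proof (rule AE_I2)
    fix t
    have "\<bar>f t * q t\<bar> = f t * \<bar>q t\<bar>" using f_nonneg[of t] by (simp add: abs_mult)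
    also have "\<dots> \<le> f t * K" using K[of t] f_nonneg[of t] by (simp add: mult_left_mono)
    also have "\<dots> \<le> \<bar>K * f t\<bar>" by (simp add: mult.commute)
    finally show "norm (f t * q t) \<le> norm (K * f t)" by simp
  qed
qed

lemma bounded01: assumes "continuous_on UNIV (g::real\<Rightarrow>real)"
  shows "\<exists>K. \<forall>u\<in>{0..1}. \<bar>g u\<bar> \<le> K"
proof -
  have "compact (g ` {0..1})" using assms by (intro compact_continuous_image) (auto intro: continuous_on_subset)
  then obtain K where "\<forall>x\<in>g ` {0..1}. norm x \<le> K" using compact_imp_bounded bounded_iff by metis
  then show ?thesis by auto
qed

lemma int_gF: assumes g: "continuous_on UNIV (g::real\<Rightarrow>real)"
  shows "integrable lborel (\<lambda>t. f t * g (F t))"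
proof -
  obtain K where K: "\<And>u. u\<in>{0..1} \<Longrightarrow> \<bar>g u\<bar> \<le> K" using bounded01[OF g] by blast
  have gm: "g \<in> borel_measurable borel" using g by (rule borel_measurable_continuous_onI)
  show ?thesis
    by (rule int_fq[where K=K]) (use gm K F_nonneg F_le1 in auto)
qed

lemma int_gF2: assumes g: "continuous_on UNIV (g::real\<Rightarrow>real)"
  shows "integrable lborel (\<lambda>t. g (F t) * (f t)\<^sup>2)"
proof -
  obtain K where K: "\<And>u. u\<in>{0..1} \<Longrightarrow> \<bar>g u\<bar> \<le> K" using bounded01[OF g] by blast
  have gm: "g \<in> borel_measurable borel" using g by (rule borel_measurable_continuous_onI)
  have "integrable lborel (\<lambda>t. f t * (f t * g (F t)))"
  proof (rule int_fq[where K="f m * K"])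
    show "(\<lambda>t. f t * g (F t)) \<in> borel_measurable borel" using gm by simp
    fix t
    have "\<bar>f t * g (F t)\<bar> = f t * \<bar>g (F t)\<bar>" using f_nonneg[of t] by (simp add: abs_mult)
    also have "\<dots> \<le> f m * K"
      using K[of "F t"] F_nonneg[of t] F_le1[of t] f_nonneg[of t] f_le_fm[of t]
      by (intro mult_mono) auto
    finally show "\<bar>f t * g (F t)\<bar> \<le> f m * K" .
  qed
  then show ?thesis by (simp add: power2_eq_square mult_ac)
qed

lemma int_f_ind: "(LINT t|lborel. f t * indicator {a..b} t) = F b - F a" if "a \<le> b"
proof -
  have ae: "AE t in lborel. f t * indicator {a..b} t = f t * indicator {..b} t - f t * indicator {..a} t"
    using AE_lborel_singleton[of a] by eventually_elim (use that in \<open>auto split: split_indicator\<close>)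
  have "(LINT t|lborel. f t * indicator {a..b} t) = (LINT t|lborel. f t * indicator {..b} t - f t * indicator {..a} t)"
    by (intro integral_cong_AE[OF _ _ ae]) auto
  also have "\<dots> = (LINT t|lborel. f t * indicator {..b} t) - (LINT t|lborel. f t * indicator {..a} t)"
    by (rule Bochner_Integration.integral_diff) (auto intro: integrable_real_mult_indicator f_int)
  also have "\<dots> = F b - F a" by (simp add: F_cdf set_lebesgue_integral_def mult.commute)
  finally show ?thesis .
qed

lemma FTC_F:
  fixes H H' :: "real \<Rightarrow> real"
  assumes D: "\<And>u. (H has_real_derivative H' u) (at u)" and C: "continuous_on UNIV H'" and ab: "a \<le> b"
  shows "(LINT t|lborel. f t * (indicator {a..b} t * H' (F t))) = H (F b) - H (F a)"
proof -
  have Hm: "H' \<in> borel_measurable borel" using C by (rule borel_measurable_continuous_onI)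
  have Fab: "F a \<le> F b" using F_mono ab by simp
  define d where "d t = f t * (indicator {F a..F b} (F t) - indicator {a..b} t)" for t
  have d0: "0 \<le> d t" for t
  proof -
    have "indicator {a..b} t \<le> (indicator {F a..F b} (F t) :: real)"
      using F_mono by (auto split: split_indicator)
    then show ?thesis unfolding d_def using f_nonneg[of t] by simp
  qed
  have i1: "(LINT t|lborel. f t * indicator {F a..F b} (F t)) = F b - F a"
  proof -
    have "(LINT t|lborel. f t * indicator {F a..F b} (F t)) = (LINT u|lborel. indicator {0..1} u * indicator {F a..F b} u)"
      by (rule PIT_int) auto
    also have "\<dots> = (LINT u|lborel. indicator {F a..F b} u)"
      using F_nonneg[of a] F_le1[of b]
      by (intro Bochner_Integration.integral_cong) (auto split: split_indicator)
    also have "\<dots> = F b - F a" using Fab by simp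
    finally show ?thesis .
  qed
  have di: "integrable lborel d" unfolding d_def
    by (rule int_fq[where K=1]) (auto split: split_indicator)
  have "(LINT t|lborel. d t) = (LINT t|lborel. f t * indicator {F a..F b} (F t)) - (LINT t|lborel. f t * indicator {a..b} t)"
    unfolding d_def right_diff_distrib
    by (rule Bochner_Integration.integral_diff) (auto intro!: int_fq[where K=1] integrable_real_mult_indicator f_int split: split_indicator)
  also have "\<dots> = 0" using i1 int_f_ind[OF ab] by simp
  finally have "(LINT t|lborel. d t) = 0" .
  then have AEd: "AE t in lborel. d t = 0"
    using integral_nonneg_eq_0_iff_AE[OF di] d0 by auto
  have "(LINT t|lborel. f t * (indicator {a..b} t * H' (F t))) = (LINT t|lborel. f t * (indicator {F a..F b} (F t) * H' (F t)))"
  proof (rule integral_cong_AE)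
    show "AE t in lborel. f t * (indicator {a..b} t * H' (F t)) = f t * (indicator {F a..F b} (F t) * H' (F t))"
      using AEd
    proof eventually_elim
      case (elim t)
      then have "f t * indicator {a..b} t = f t * indicator {F a..F b} (F t)" unfolding d_def by (auto simp: algebra_simps)
      then show ?case by (metis mult.assoc)
    qed
  qed (use Hm in auto)
  also have "\<dots> = (LINT u|lborel. indicator {0..1} u * (indicator {F a..F b} u * H' u))"
    by (rule PIT_int) (use Hm in auto)
  also have "\<dots> = (LINT u|lborel. indicator {F a..F b} u *\<^sub>R H' u)"
    using F_nonneg[of a] F_le1[of b]
    by (intro Bochner_Integration.integral_cong) (auto split: split_indicator)
  also have "\<dots> = H (F b) - H (F a)"
  proof (rule integral_FTC_atLeastAtMost[OF Fab])
    fix x show "(H has_vector_derivative H' x) (at x within {F a..F b})"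
      using D[of x] by (simp add: has_real_derivative_iff_has_vector_derivative[symmetric] has_field_derivative_at_within)
    show "continuous_on {F a..F b} H'" using C by (rule continuous_on_subset) auto
  qed
  finally show ?thesis .
qed

end


context dens begin

lemma SC:
  fixes H H' :: "real \<Rightarrow> real"
  assumes D: "\<And>u. (H has_real_derivative H' u) (at u)" and C: "continuous_on UNIV H'"
    and Hp: "\<And>u. F m \<le> u \<Longrightarrow> u \<le> 1 \<Longrightarrow> 0 \<le> H u"
    and Hn: "\<And>u. 0 \<le> u \<Longrightarrow> u \<le> F m \<Longrightarrow> H u \<le> 0"
  shows "0 \<le> (LINT t|lborel. H' (F t) * (f t)\<^sup>2)"
proof -
  have Hm[measurable]: "H' \<in> borel_measurable borel" using C by (rule borel_measurable_continuous_onI)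
  define \<phi> where "\<phi> t s = (if 0 < s \<and> s < f t then f t * H' (F t) else 0)" for t s :: real
  have meas: "(\<lambda>(t,s). \<phi> t s) \<in> borel_measurable (lborel \<Otimes>\<^sub>M lborel)"
  proof -
    have "(\<lambda>(t,s). \<phi> t s) = (\<lambda>x. if 0 < snd x \<and> snd x < f (fst x) then f (fst x) * H' (F (fst x)) else 0)"
      by (auto simp: \<phi>_def fun_eq_iff)
    also have "\<dots> \<in> borel_measurable (lborel \<Otimes>\<^sub>M lborel)" by measurable
    finally show ?thesis .
  qed
  have phi_ind: "\<phi> t s = indicator {0<..<f t} s * (f t * H' (F t))" for t s
    by (auto simp: \<phi>_def split: split_indicator)
  have inner: "(LINT s|lborel. \<phi> t s) = H' (F t) * (f t)\<^sup>2" for t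
    using f_nonneg[of t] by (simp add: phi_ind power2_eq_square)
  have innerabs: "(LINT s|lborel. norm (\<phi> t s)) = \<bar>H' (F t)\<bar> * (f t)\<^sup>2" for t
  proof -
    have "(LINT s|lborel. norm (\<phi> t s)) = (LINT s|lborel. indicator {0<..<f t} s * \<bar>f t * H' (F t)\<bar>)"
      by (intro Bochner_Integration.integral_cong) (auto simp: phi_ind split: split_indicator)
    then show ?thesis using f_nonneg[of t] by (simp add: power2_eq_square abs_mult)
  qed
  have integ: "integrable (lborel \<Otimes>\<^sub>M lborel) (\<lambda>(t,s). \<phi> t s)"
  proof (rule lborel_pair.Fubini_integrable)
    show "(\<lambda>(t,s). \<phi> t s) \<in> borel_measurable (lborel \<Otimes>\<^sub>M lborel)" by (rule meas)
    have "integrable lborel (\<lambda>t. \<bar>H' (F t)\<bar> * (f t)\<^sup>2)"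
      by (rule int_gF2) (intro continuous_intros C)
    then show "integrable lborel (\<lambda>t. LINT s|lborel. norm (case (t, s) of (t, s) \<Rightarrow> \<phi> t s))"
      using innerabs by simp
    show "AE t in lborel. integrable lborel (\<lambda>s. case (t, s) of (t, s) \<Rightarrow> \<phi> t s)"
    proof (rule AE_I2)
      fix t
      have "integrable lborel (\<lambda>s. indicator {0<..<f t} s * (f t * H' (F t)))"
        using f_nonneg[of t] by (simp add: integrable_indicator_iff emeasure_lborel_Ioo)
      then show "integrable lborel (\<lambda>s. case (t, s) of (t, s) \<Rightarrow> \<phi> t s)"
        by (simp add: phi_ind)
    qed
  qed
  have "(LINT t|lborel. H' (F t) * (f t)\<^sup>2) = (LINT t|lborel. LINT s|lborel. \<phi> t s)"
    using inner by simp
  also have "\<dots> = (LINT s|lborel. LINT t|lborel. \<phi> t s)"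
    using lborel_pair.Fubini_integral[OF integ] by simp
  also have "\<dots> \<ge> 0"
  proof (rule Bochner_Integration.integral_nonneg)
    fix s
    show "0 \<le> (LINT t|lborel. \<phi> t s)"
    proof (cases "0 < s \<and> (\<exists>t. s < f t)")
      case False
      then have "\<phi> t s = 0" for t by (auto simp: \<phi>_def)
      then show ?thesis by simp
    next
      case True
      then have s0: "0 < s" and "\<exists>t. s < f t" by auto
      then obtain t1 where t1: "s < f t1" by auto
      define I where "I = {t. s < f t}"
      have mI: "m \<in> I" using t1 f_le_fm[of t1] unfolding I_def by simp
      have ub: "t \<le> m + 1/s" if "t \<in> I" for t
      proof (cases "m \<le> t")
        case True
        have "s * (t - m) \<le> (LINT t|lborel. f t)"
        proof (rule int_lower[OF f_int f_nonneg])
          show "0 \<le> t - m" using True by simp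
          show "0 \<le> s" using s0 by simp
          fix u assume "u \<in> {m..m + (t - m)}"
          then have "f t \<le> f u" using down[of u t] by auto
          then show "s \<le> f u" using that unfolding I_def by simp
        qed
        then have "s * (t - m) \<le> 1" using f_total by simp
        then show ?thesis using s0 by (simp add: field_simps)
      next
        case False
        have "0 < 1/s" using s0 by simp
        with False show ?thesis by linarith
      qed
      have lb: "m - 1/s \<le> t" if "t \<in> I" for t
      proof (cases "t \<le> m")
        case True
        have "s * (m - t) \<le> (LINT t|lborel. f t)"
        proof (rule int_lower[OF f_int f_nonneg])
          show "0 \<le> m - t" using True by simp
          show "0 \<le> s" using s0 by simp
          fix u assume "u \<in> {t..t + (m - t)}"
          then have "f t \<le> f u" using up[of t u] by auto
          then show "s \<le> f u" using that unfolding I_def by simp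
        qed
        then have "s * (m - t) \<le> 1" using f_total by simp
        then show ?thesis using s0 by (simp add: field_simps)
      next
        case False
        have "0 < 1/s" using s0 by simp
        with False show ?thesis by linarith
      qed
      have ne: "I \<noteq> {}" using mI by auto
      have bdda: "bdd_above I" using ub by (auto simp: bdd_above_def)
      have bddb: "bdd_below I" using lb by (auto simp: bdd_below_def)
      define a where "a = Inf I"
      define b where "b = Sup I"
      have am: "a \<le> m" unfolding a_def using mI bddb by (rule cInf_lower)
      have mb: "m \<le> b" unfolding b_def using mI bdda by (rule cSup_upper)
      have inI: "t \<in> I" if "a < t" "t < b" for t
      proof -
        obtain t' where t': "t' \<in> I" "t' < t" using \<open>a < t\<close> ne bddb unfolding a_def by (meson cInf_less_iff)
        obtain t'' where t'': "t'' \<in> I" "t < t''" using \<open>t < b\<close> ne bdda unfolding b_def by (meson less_cSup_iff)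
        show ?thesis
        proof (cases "t \<le> m")
          case True
          then have "f t' \<le> f t" using up[of t' t] t' by auto
          then show ?thesis using t' unfolding I_def by auto
        next
          case False
          then have "f t'' \<le> f t" using down[of t t''] t'' by auto
          then show ?thesis using t'' unfolding I_def by auto
        qed
      qed
      have Iab: "a \<le> t \<and> t \<le> b" if "t \<in> I" for t
        using that bdda bddb unfolding a_def b_def by (auto intro: cInf_lower cSup_upper)
      have ab: "a \<le> b" using am mb by simp
      have "(LINT t|lborel. \<phi> t s) = (LINT t|lborel. f t * (indicator {a..b} t * H' (F t)))"
      proof (rule integral_cong_AE)
        show "(\<lambda>t. \<phi> t s) \<in> borel_measurable lborel" unfolding \<phi>_def by measurable
        show "(\<lambda>t. f t * (indicator {a..b} t * H' (F t))) \<in> borel_measurable lborel" by measurable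
        have "AE t in lborel. t \<noteq> a" by (rule AE_lborel_singleton[THEN AE_mp]) auto
        moreover have "AE t in lborel. t \<noteq> b" by (rule AE_lborel_singleton[THEN AE_mp]) auto
        ultimately show "AE t in lborel. \<phi> t s = f t * (indicator {a..b} t * H' (F t))"
        proof eventually_elim
          case (elim t)
          have "(s < f t) = (a \<le> t \<and> t \<le> b)"
            using Iab[of t] inI[of t] elim unfolding I_def by force
          then show ?case unfolding \<phi>_def using s0 by (auto split: split_indicator)
        qed
      qed
      also have "\<dots> = H (F b) - H (F a)" by (rule FTC_F[OF D C ab])
      also have "\<dots> \<ge> 0"
      proof -
        have "0 \<le> H (F b)" using Hp F_mono[OF mb] F_le1 by auto
        moreover have "H (F a) \<le> 0" using Hn F_mono[OF am] F_nonneg by auto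
        ultimately show ?thesis by simp
      qed
      finally show ?thesis .
    qed
  qed
  finally show ?thesis .
qed

end


lemma conv_weak:
  assumes cv: "strictly_convex_on S c" and p: "p \<in> S" and q: "q \<in> S" and t: "0 \<le> t" "t \<le> 1"
  shows "c ((1 - t) * p + t * q) \<le> (1 - t) * c p + t * c q"
proof (cases "p = q \<or> t = 0 \<or> t = 1")
  case True
  then show ?thesis by (auto simp: algebra_simps)
next
  case False
  then have "0 < t" "t < 1" "p \<noteq> q" using t by auto
  then have "c ((1 - t) * p + t * q) < (1 - t) * c p + t * c q"
    using cv p q unfolding strictly_convex_on_def by blast
  then show ?thesis by simp
qed

lemma slope1:
  assumes cv: "strictly_convex_on S c" and "x \<in> S" "z \<in> S" "x < w" "w \<le> z"
  shows "(c w - c x) / (w - x) \<le> (c z - c x) / (z - x)"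
proof -
  define t where "t = (w - x) / (z - x)"
  have t0: "0 \<le> t" "t \<le> 1" using assms by (auto simp: t_def field_simps)
  have e: "t * (z - x) = w - x" unfolding t_def using assms by simp
  have "(1 - t) * x + t * z = x + t * (z - x)" by (simp add: algebra_simps)
  then have w: "w = (1 - t) * x + t * z" using e by linarith
  have "c w \<le> (1 - t) * c x + t * c z" unfolding w by (rule conv_weak[OF cv assms(2,3) t0])
  then have "c w - c x \<le> t * (c z - c x)" by (simp add: algebra_simps)
  also have "t * (c z - c x) = ((c z - c x) / (z - x)) * (w - x)" by (simp add: t_def)
  finally have le: "c w - c x \<le> ((c z - c x) / (z - x)) * (w - x)" .
  have "0 < w - x" using assms by simp
  from pos_divide_le_eq[OF this] le show ?thesis by blast
qed

lemma slope2:
  assumes cv: "strictly_convex_on S c" and "z \<in> S" "y \<in> S" "z \<le> w" "w < y"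
  shows "(c y - c z) / (y - z) \<le> (c y - c w) / (y - w)"
proof -
  define t where "t = (w - z) / (y - z)"
  have t0: "0 \<le> t" "t \<le> 1" using assms by (auto simp: t_def field_simps)
  have e: "t * (y - z) = w - z" unfolding t_def using assms by simp
  have "(1 - t) * z + t * y = z + t * (y - z)" by (simp add: algebra_simps)
  then have w: "w = (1 - t) * z + t * y" using e by linarith
  have "c w \<le> (1 - t) * c z + t * c y" unfolding w by (rule conv_weak[OF cv assms(2,3) t0])
  then have "(1 - t) * (c y - c z) \<le> c y - c w" by (simp add: algebra_simps)
  moreover have "y - w = (1 - t) * (y - z)" using assms by (simp add: t_def field_simps)
  moreover have "0 < 1 - t" using assms by (simp add: t_def field_simps)
  ultimately have le: "((c y - c z) / (y - z)) * (y - w) \<le> c y - c w" using assms by (simp add: mult_ac)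
  have "0 < y - w" using assms by simp
  from pos_le_divide_eq[OF this] le show ?thesis by blast
qed

lemma cprime_strict:
  fixes c c' :: "real \<Rightarrow> real"
  assumes cd: "\<And>x. x \<in> {0..xb} \<Longrightarrow> (c has_real_derivative c' x) (at x within {0..xb})"
    and cv: "strictly_convex_on {0..xb} c"
    and xy: "x < y" "x \<in> {0..xb}" "y \<in> {0..xb}"
  shows "c' x < c' y"
proof -
  define z where "z = (x + y) / 2"
  have zS: "z \<in> {0..xb}" using xy by (auto simp: z_def)
  have xz: "x < z" "z < y" using xy by (auto simp: z_def)
  have lx: "c' x \<le> (c z - c x) / (z - x)"
  proof -
    have "((\<lambda>w. (c w - c x) / (w - x)) \<longlongrightarrow> c' x) (at x within {0..xb})"
      using cd[OF xy(2)] by (simp add: has_field_derivative_iff)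
    then have "((\<lambda>w. (c w - c x) / (w - x)) \<longlongrightarrow> c' x) (at x within {x..z})"
      by (rule tendsto_within_subset) (use xy zS in auto)
    then have T: "((\<lambda>w. (c w - c x) / (w - x)) \<longlongrightarrow> c' x) (at_right x)"
      using xz by (simp add: at_within_Icc_at_right)
    have E: "eventually (\<lambda>w. (c w - c x) / (w - x) \<le> (c z - c x) / (z - x)) (at_right x)"
      unfolding eventually_at_right[OF xz(1)]
      by (rule exI[of _ z]) (use xz in \<open>auto intro!: slope1[OF cv xy(2) zS]\<close>)
    show ?thesis by (rule tendsto_upperbound[OF T E]) simp
  qed
  have ly: "(c y - c z) / (y - z) \<le> c' y"
  proof -
    have "((\<lambda>w. (c w - c y) / (w - y)) \<longlongrightarrow> c' y) (at y within {0..xb})"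
      using cd[OF xy(3)] by (simp add: has_field_derivative_iff)
    then have "((\<lambda>w. (c w - c y) / (w - y)) \<longlongrightarrow> c' y) (at y within {z..y})"
      by (rule tendsto_within_subset) (use xy zS in auto)
    then have T: "((\<lambda>w. (c w - c y) / (w - y)) \<longlongrightarrow> c' y) (at_left y)"
      using xz by (simp add: at_within_Icc_at_left)
    have E: "eventually (\<lambda>w. (c y - c z) / (y - z) \<le> (c w - c y) / (w - y)) (at_left y)"
    proof -
      have "(c y - c z) / (y - z) \<le> (c w - c y) / (w - y)" if "z < w" "w < y" for w
      proof -
        have "(c y - c z) / (y - z) \<le> (c y - c w) / (y - w)"
          by (rule slope2[OF cv zS xy(3)]) (use that in auto)
        also have "(c y - c w) / (y - w) = (c w - c y) / (w - y)" by (metis minus_diff_eq minus_divide_divide)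
        finally show ?thesis .
      qed
      then show ?thesis unfolding eventually_at_left[OF xz(2)] using xz by (auto intro!: exI[of _ z])
    qed
    show ?thesis by (rule tendsto_lowerbound[OF T E]) simp
  qed
  have ne: "x \<noteq> y" using xy by simp
  have h: "(0::real) < 1/2" "(1/2::real) < 1" by auto
  have "c ((1 - 1/2) * x + (1/2) * y) < (1 - 1/2) * c x + (1/2) * c y"
    using cv xy(2,3) ne h unfolding strictly_convex_on_def by blast
  moreover have "(1 - 1/2) * x + (1/2) * y = z" by (simp add: z_def)
  ultimately have "c z < (1 - 1/2) * c x + (1/2) * c y" by simp
  then have "c z - c x < c y - c z" by simp
  then have "(c z - c x) / (z - x) < (c y - c z) / (z - x)"
    by (rule divide_strict_right_mono) (use xz in simp)
  moreover have "z - x = y - z" by (simp add: z_def field_simps)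
  ultimately have mid: "(c z - c x) / (z - x) < (c y - c z) / (y - z)" by metis
  show ?thesis using lx mid ly by linarith
qed


definition Vv :: "nat \<Rightarrow> nat \<Rightarrow> real" where
  "Vv k s = (if 1 \<le> s \<and> s \<le> k then 1 / real k else 0)"

lemma sum_if_le: "(\<Sum>r\<in>{1..n::nat}. if r \<le> (k::nat) then g r else 0) = (\<Sum>r\<in>{1..min n k}. g r)"
proof -
  have "(\<Sum>r\<in>{1..n}. if r \<le> k then g r else 0) = (\<Sum>r\<in>{r\<in>{1..n}. r \<le> k}. g r)"
    by (rule sum.inter_filter[symmetric]) (rule finite_atLeastAtMost)
  also have "{r\<in>{1..n}. r \<le> k} = {1..min n k}" by (auto simp: min_def)
  finally show ?thesis .
qed

lemma Vv_in: assumes "1 \<le> k" "k \<le> n" shows "Vv k \<in> Vset n"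
proof -
  have "(\<Sum>r=1..n. Vv k r) = (\<Sum>r\<in>{1..n}. if r \<le> k then 1 / real k else 0)"
    by (intro sum.cong) (auto simp: Vv_def)
  also have "\<dots> = (\<Sum>r\<in>{1..k}. 1 / real k)" using sum_if_le[where n=n and k=k and g="\<lambda>_. 1 / real k"] assms by (simp add: min_absorb2)
  also have "\<dots> = 1" using assms by simp
  finally show ?thesis unfolding Vset_def using assms by (auto simp: Vv_def)
qed

lemma R_vertex: assumes "1 \<le> k" "k \<le> n" shows "Rfun n F f (Vv k) = Bsum n F f k / real k"
proof -
  have "Rfun n F f (Vv k) = (\<Sum>r\<in>{1..n}. if r \<le> k then beta n F f r / real k else 0)"
    unfolding Rfun_def by (intro sum.cong) (auto simp: Vv_def)
  also have "\<dots> = (\<Sum>r\<in>{1..k}. beta n F f r / real k)" using sum_if_le[where n=n and k=k] assms by (simp add: min_absorb2)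
  also have "\<dots> = Bsum n F f k / real k" by (simp add: Bsum_def sum_divide_distrib)
  finally show ?thesis .
qed

lemma Bsum_split: assumes "k \<le> n" shows "Bsum n F f n = Bsum n F f k + (\<Sum>r\<in>{Suc k..n}. beta n F f r)"
proof -
  have "{1..n} = {1..k} \<union> {Suc k..n}" using assms by auto
  then have "Bsum n F f n = (\<Sum>r\<in>{1..k} \<union> {Suc k..n}. beta n F f r)" by (simp add: Bsum_def)
  also have "\<dots> = Bsum n F f k + (\<Sum>r\<in>{Suc k..n}. beta n F f r)"
    by (subst sum.union_disjoint) (auto simp: Bsum_def)
  finally show ?thesis .
qed

lemma L_vertex: assumes k: "1 \<le> k" "k \<le> n" and Bn: "Bsum n F f n = 0"
  shows "Lfun n F f (Vv k) = (2 * real k - real n) * Bsum n F f k / (real n * real k)"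
proof -
  let ?b = "beta n F f" and ?B = "Bsum n F f"
  have inner: "(\<Sum>s\<in>{1..<r}. (?b r + ?b s) * (Vv k s - Vv k r)) = (if k < r then (\<Sum>s\<in>{1..k}. (?b r + ?b s)) / real k else 0)"
    if r: "r \<in> {1..n}" for r
  proof (cases "k < r")
    case True
    have "(\<Sum>s\<in>{1..<r}. (?b r + ?b s) * (Vv k s - Vv k r)) = (\<Sum>s\<in>{1..<r}. if s \<le> k then (?b r + ?b s) / real k else 0)"
      using True by (intro sum.cong) (auto simp: Vv_def)
    also have "\<dots> = (\<Sum>s\<in>{s\<in>{1..<r}. s \<le> k}. (?b r + ?b s) / real k)" by (rule sum.inter_filter[symmetric]) (rule finite_atLeastLessThan)
    also have "{s\<in>{1..<r}. s \<le> k} = {1..k}" using True by auto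
    finally show ?thesis using True by (simp add: sum_divide_distrib)
  next
    case False
    then show ?thesis by (auto simp: Vv_def intro!: sum.neutral)
  qed
  have "(\<Sum>r=1..n. \<Sum>s\<in>{1..<r}. (?b r + ?b s) * (Vv k s - Vv k r))
      = (\<Sum>r\<in>{1..n}. if k < r then (\<Sum>s\<in>{1..k}. (?b r + ?b s)) / real k else 0)"
    using inner by (intro sum.cong) auto
  also have "\<dots> = (\<Sum>r\<in>{r\<in>{1..n}. k < r}. (\<Sum>s\<in>{1..k}. (?b r + ?b s)) / real k)"
    by (rule sum.inter_filter[symmetric]) (rule finite_atLeastAtMost)
  also have "{r\<in>{1..n}. k < r} = {Suc k..n}" using k by auto
  also have "(\<Sum>r\<in>{Suc k..n}. (\<Sum>s\<in>{1..k}. (?b r + ?b s)) / real k)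
      = (\<Sum>r\<in>{Suc k..n}. (real k * ?b r + ?B k) / real k)"
    by (intro sum.cong) (auto simp: sum.distrib Bsum_def)
  also have "\<dots> = (\<Sum>r\<in>{Suc k..n}. ?b r) + real (n - k) * ?B k / real k"
    using k by (simp add: sum_divide_distrib[symmetric] sum.distrib sum_distrib_left[symmetric] add_divide_distrib)
  also have "(\<Sum>r\<in>{Suc k..n}. ?b r) = - ?B k" using Bsum_split[OF k(2)] Bn by simp
  finally have S: "(\<Sum>r=1..n. \<Sum>s\<in>{1..<r}. (?b r + ?b s) * (Vv k s - Vv k r)) = - ?B k + real (n - k) * ?B k / real k" .
  have n0: "0 < real n" using k by simp
  have k0: "0 < real k" using k by simp
  show ?thesis unfolding Lfun_def S using k n0 k0 by (simp add: of_nat_diff field_simps)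
qed

lemma M_vertex: assumes "1 \<le> k" "k \<le> n" "Bsum n F f n = 0"
  shows "Mfun n F f (Vv k) \<theta> = Afun n F f k \<theta>"
  unfolding Mfun_def Afun_def R_vertex[OF assms(1,2)] L_vertex[OF assms]
  using assms by (simp add: field_simps)

lemma lin_R: "Rfun n F f (\<lambda>s. \<Sum>k\<in>K. w k * V k s) = (\<Sum>k\<in>K. w k * Rfun n F f (V k))"
proof -
  have "Rfun n F f (\<lambda>s. \<Sum>k\<in>K. w k * V k s) = (\<Sum>r=1..n. \<Sum>k\<in>K. w k * (beta n F f r * V k r))"
    unfolding Rfun_def by (simp add: sum_distrib_left mult_ac)
  also have "\<dots> = (\<Sum>k\<in>K. \<Sum>r=1..n. w k * (beta n F f r * V k r))" by (rule sum.swap)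
  also have "\<dots> = (\<Sum>k\<in>K. w k * Rfun n F f (V k))" unfolding Rfun_def by (simp add: sum_distrib_left)
  finally show ?thesis .
qed

lemma lin_L: "Lfun n F f (\<lambda>s. \<Sum>k\<in>K. w k * V k s) = (\<Sum>k\<in>K. w k * Lfun n F f (V k))"
proof -
  let ?b = "beta n F f"
  have e: "(?b r + ?b s) * ((\<Sum>k\<in>K. w k * V k s) - (\<Sum>k\<in>K. w k * V k r))
      = (\<Sum>k\<in>K. w k * ((?b r + ?b s) * (V k s - V k r)))" for r s
  proof -
    have "(\<Sum>k\<in>K. w k * V k s) - (\<Sum>k\<in>K. w k * V k r) = (\<Sum>k\<in>K. w k * (V k s - V k r))"
      by (simp add: sum_subtractf right_diff_distrib)
    then show ?thesis by (simp add: sum_distrib_left mult_ac)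
  qed
  have "(\<Sum>r=1..n. \<Sum>s\<in>{1..<r}. (?b r + ?b s) * ((\<Sum>k\<in>K. w k * V k s) - (\<Sum>k\<in>K. w k * V k r)))
     = (\<Sum>r=1..n. \<Sum>s\<in>{1..<r}. \<Sum>k\<in>K. w k * ((?b r + ?b s) * (V k s - V k r)))"
    by (simp only: e)
  also have "\<dots> = (\<Sum>r=1..n. \<Sum>k\<in>K. \<Sum>s\<in>{1..<r}. w k * ((?b r + ?b s) * (V k s - V k r)))"
    by (intro sum.cong refl sum.swap)
  also have "\<dots> = (\<Sum>k\<in>K. \<Sum>r=1..n. \<Sum>s\<in>{1..<r}. w k * ((?b r + ?b s) * (V k s - V k r)))"
    by (rule sum.swap)
  also have "\<dots> = (\<Sum>k\<in>K. w k * (\<Sum>r=1..n. \<Sum>s\<in>{1..<r}. (?b r + ?b s) * (V k s - V k r)))"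
    by (simp add: sum_distrib_left)
  finally have S: "(\<Sum>r=1..n. \<Sum>s\<in>{1..<r}. (?b r + ?b s) * ((\<Sum>k\<in>K. w k * V k s) - (\<Sum>k\<in>K. w k * V k r)))
     = (\<Sum>k\<in>K. w k * (\<Sum>r=1..n. \<Sum>s\<in>{1..<r}. (?b r + ?b s) * (V k s - V k r)))" .
  show ?thesis unfolding Lfun_def S by (simp add: sum_distrib_left mult_ac)
qed

lemma R_cong: "(\<And>s. s \<in> {1..n} \<Longrightarrow> v s = v' s) \<Longrightarrow> Rfun n F f v = Rfun n F f v'"
  unfolding Rfun_def by (intro sum.cong) auto

lemma L_cong: "(\<And>s. s \<in> {1..n} \<Longrightarrow> v s = v' s) \<Longrightarrow> Lfun n F f v = Lfun n F f v'"
  unfolding Lfun_def by (intro arg_cong[where f="\<lambda>x. _ * x"] sum.cong refl) auto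

lemma weighted_tel: "(\<Sum>k=1..N. real k * (a k - a (Suc k))) = (\<Sum>k=1..N. a k) - real N * a (Suc N)"
  by (induction N) (auto simp: algebra_simps)

definition vt :: "nat \<Rightarrow> (nat \<Rightarrow> real) \<Rightarrow> nat \<Rightarrow> real" where
  "vt n v s = (if s \<le> n then v s else 0)"

definition wt :: "nat \<Rightarrow> (nat \<Rightarrow> real) \<Rightarrow> nat \<Rightarrow> real" where
  "wt n v k = real k * (vt n v k - vt n v (Suc k))"

lemma recon: assumes s: "s \<in> {1..n}" shows "(\<Sum>k\<in>{1..n}. wt n v k * Vv k s) = v s"
proof -
  have "(\<Sum>k\<in>{1..n}. wt n v k * Vv k s) = (\<Sum>k\<in>{1..n}. if s \<le> k then vt n v k - vt n v (Suc k) else 0)"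
    using s by (intro sum.cong) (auto simp: Vv_def wt_def)
  also have "\<dots> = (\<Sum>k\<in>{k\<in>{1..n}. s \<le> k}. vt n v k - vt n v (Suc k))" by (rule sum.inter_filter[symmetric]) (rule finite_atLeastAtMost)
  also have "{k\<in>{1..n}. s \<le> k} = {s..n}" using s by auto
  also have "(\<Sum>k\<in>{s..n}. vt n v k - vt n v (Suc k)) = - (\<Sum>k\<in>{s..n}. vt n v (Suc k) - vt n v k)"
    by (simp add: sum_negf[symmetric])
  also have "\<dots> = vt n v s - vt n v (Suc n)" using s sum_Suc_diff[of s n "vt n v"] by simp
  also have "\<dots> = v s" using s by (simp add: vt_def)
  finally show ?thesis .
qed

lemma wt_nonneg: assumes v: "v \<in> Vset n" and k: "k \<in> {1..n}" shows "0 \<le> wt n v k"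
proof (cases "k < n")
  case True
  then have "v (Suc k) \<le> v k" using v k unfolding Vset_def by auto
  then show ?thesis using True by (simp add: wt_def vt_def)
next
  case False
  then have "k = n" using k by simp
  then show ?thesis using v unfolding Vset_def by (simp add: wt_def vt_def)
qed

lemma wt_sum: assumes v: "v \<in> Vset n" shows "(\<Sum>k\<in>{1..n}. wt n v k) = 1"
proof -
  have "(\<Sum>k\<in>{1..n}. wt n v k) = (\<Sum>k=1..n. vt n v k) - real n * vt n v (Suc n)"
    unfolding wt_def by (rule weighted_tel)
  also have "\<dots> = (\<Sum>k=1..n. v k)" by (simp add: vt_def)
  finally show ?thesis using v unfolding Vset_def by simp
qed

lemma M_decomp: assumes v: "v \<in> Vset n"
  shows "Mfun n F f v \<theta> = (\<Sum>k\<in>{1..n}. wt n v k * Mfun n F f (Vv k) \<theta>)"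
proof -
  have "Rfun n F f v = Rfun n F f (\<lambda>s. \<Sum>k\<in>{1..n}. wt n v k * Vv k s)"
    by (rule R_cong, rule recon[symmetric], assumption)
  moreover have "Lfun n F f v = Lfun n F f (\<lambda>s. \<Sum>k\<in>{1..n}. wt n v k * Vv k s)"
    by (rule L_cong, rule recon[symmetric], assumption)
  ultimately show ?thesis
    unfolding Mfun_def lin_R lin_L by (simp add: sum.distrib sum_distrib_left algebra_simps)
qed

definition MA :: "nat \<Rightarrow> (real \<Rightarrow> real) \<Rightarrow> (real \<Rightarrow> real) \<Rightarrow> real \<Rightarrow> real" where
  "MA n F f \<theta> = Max ((\<lambda>k. Afun n F f k \<theta>) ` {1..n})"

lemma Mstar_eq: assumes n: "1 \<le> n" and Bn: "Bsum n F f n = 0"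
  shows "Mstar n F f \<theta> = MA n F f \<theta>"
proof -
  have fin: "finite ((\<lambda>k. Afun n F f k \<theta>) ` {1..n})" and ne: "(\<lambda>k. Afun n F f k \<theta>) ` {1..n} \<noteq> {}"
    using n by auto
  obtain k0 where k0: "k0 \<in> {1..n}" "MA n F f \<theta> = Afun n F f k0 \<theta>"
    using Max_in[OF fin ne] unfolding MA_def by auto
  have le: "Afun n F f k \<theta> \<le> MA n F f \<theta>" if "k \<in> {1..n}" for k
    unfolding MA_def using fin that by (intro Max_ge) auto
  show ?thesis unfolding Mstar_def
  proof (rule cSup_eq_maximum)
    show "MA n F f \<theta> \<in> (\<lambda>v. Mfun n F f v \<theta>) ` Vset n"
      using k0 Vv_in[of k0 n] M_vertex[of k0 n F f \<theta>] Bn by (auto intro!: image_eqI[of _ _ "Vv k0"])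
    fix x assume "x \<in> (\<lambda>v. Mfun n F f v \<theta>) ` Vset n"
    then obtain v where v: "v \<in> Vset n" and x: "x = Mfun n F f v \<theta>" by auto
    have "x = (\<Sum>k\<in>{1..n}. wt n v k * Afun n F f k \<theta>)"
      unfolding x M_decomp[OF v] using M_vertex Bn by (intro sum.cong) auto
    also have "\<dots> \<le> (\<Sum>k\<in>{1..n}. wt n v k * MA n F f \<theta>)"
      using wt_nonneg[OF v] le by (intro sum_mono mult_left_mono) auto
    also have "\<dots> = MA n F f \<theta>" using wt_sum[OF v] by (simp add: sum_distrib_right[symmetric])
    finally show "x \<le> MA n F f \<theta>" .
  qed
qed


context dens begin

lemma beta_eq: "beta n F f r = real ((n-1) choose (r-1)) * (LINT t|lborel. dg n r (F t) * (f t)\<^sup>2)"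
  by (simp add: beta_def deriv_gfun)

lemma dg_cont: "continuous_on UNIV (dg n r)" unfolding dg_def by (intro continuous_intros)

lemma int_dg: "integrable lborel (\<lambda>t. dg n r (F t) * (f t)\<^sup>2)" by (rule int_gF2[OF dg_cont])

lemma Bsum_int: "Bsum n F f r = (LINT t|lborel. (\<Sum>k=1..r. real ((n-1) choose (k-1)) * dg n k (F t)) * (f t)\<^sup>2)"
proof -
  have "(LINT t|lborel. (\<Sum>k=1..r. real ((n-1) choose (k-1)) * dg n k (F t)) * (f t)\<^sup>2)
      = (LINT t|lborel. (\<Sum>k=1..r. real ((n-1) choose (k-1)) * (dg n k (F t) * (f t)\<^sup>2)))"
    by (intro arg_cong[where f="integral\<^sup>L lborel"] ext) (simp add: sum_distrib_right mult.assoc)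
  also have "\<dots> = (\<Sum>k=1..r. LINT t|lborel. real ((n-1) choose (k-1)) * (dg n k (F t) * (f t)\<^sup>2))"
    by (rule Bochner_Integration.integral_sum) (simp add: int_dg)
  also have "\<dots> = Bsum n F f r" by (simp add: Bsum_def beta_eq)
  finally show ?thesis ..
qed

lemma Bsum_formula: assumes "r \<ge> 1" "r \<le> N + 1"
  shows "Bsum (N+2) F f r = (LINT t|lborel. real (N+1) * real (N choose (r-1)) * (F t)^(N-(r-1)) * (1 - F t)^(r-1) * (f t)\<^sup>2)"
proof -
  have "(\<Sum>k=1..r. real ((N+2-1) choose (k-1)) * dg (N+2) k u) = real (N+1) * real (N choose (r-1)) * u^(N-(r-1)) * (1-u)^(r-1)" for u
    using Pid[of "r-1" N u] assms by simp
  then show ?thesis unfolding Bsum_int by simp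
qed

lemma Bsum_nonneg: assumes "r \<ge> 1" "r \<le> N + 1" shows "0 \<le> Bsum (N+2) F f r"
  unfolding Bsum_formula[OF assms]
  by (intro Bochner_Integration.integral_nonneg) (auto intro!: mult_nonneg_nonneg simp: F_nonneg F_le1)

lemma Bsum_n: "Bsum (N+2) F f (N+2) = 0"
proof -
  have "(\<Sum>k=1..N+2. real ((N+2-1) choose (k-1)) * dg (N+2) k u) = 0" for u using Bn_id[of N u] by simp
  then show ?thesis unfolding Bsum_int by simp
qed

lemma f2_pos: "0 < (LINT t|lborel. (f t)\<^sup>2)"
proof -
  have i: "integrable lborel (\<lambda>t. (f t)\<^sup>2)" using int_gF2[of "\<lambda>_. 1"] by simp
  have nn: "0 \<le> (LINT t|lborel. (f t)\<^sup>2)" by (intro Bochner_Integration.integral_nonneg) simp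
  show ?thesis
  proof (rule ccontr)
    assume "\<not> ?thesis"
    then have "(LINT t|lborel. (f t)\<^sup>2) = 0" using nn by simp
    then have "AE t in lborel. (f t)\<^sup>2 = 0" using integral_nonneg_eq_0_iff_AE[OF i] by simp
    then have ae: "AE t in lborel. f t = 0" by simp
    have "(LINT t|lborel. f t) = 0" using integral_eq_zero_AE[OF ae] by simp
    then show False using f_total by simp
  qed
qed

lemma Bsum_some_pos: "\<exists>r\<in>{1..N+1}. 0 < Bsum (N+2) F f r"
proof (rule ccontr)
  assume neg: "\<not> ?thesis"
  have z: "Bsum (N+2) F f r = 0" if r: "r \<in> {1..N+1}" for r
  proof -
    have "0 \<le> Bsum (N+2) F f r" using r by (intro Bsum_nonneg) auto
    moreover have "\<not> 0 < Bsum (N+2) F f r" using neg r by auto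
    ultimately show ?thesis by simp
  qed
  have "(\<Sum>r=1..N+1. Bsum (N+2) F f r) = (\<Sum>i=0..N. Bsum (N+2) F f (i+1))"
    by (rule sum.reindex_bij_witness[where j="\<lambda>r. r - 1" and i="\<lambda>i. i + 1"]) auto
  also have "\<dots> = (\<Sum>i=0..N. LINT t|lborel. real (N+1) * real (N choose i) * (F t)^(N-i) * (1 - F t)^i * (f t)\<^sup>2)"
    by (intro sum.cong refl) (subst Bsum_formula, auto)
  also have "\<dots> = (LINT t|lborel. (\<Sum>i=0..N. real (N+1) * real (N choose i) * (F t)^(N-i) * (1 - F t)^i) * (f t)\<^sup>2)"
    by (subst Bochner_Integration.integral_sum[symmetric]) (auto simp: sum_distrib_right intro!: int_gF2 continuous_intros)
  also have "\<dots> = (LINT t|lborel. real (N+1) * (f t)\<^sup>2)" by (simp only: Psum_id)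
  also have "\<dots> > 0" using f2_pos by simp
  finally show False using z by simp
qed

lemma sc_beta: assumes jk: "1 \<le> j" "j < k" "k \<le> n" and bk: "0 < beta n F f k"
  shows "0 \<le> beta n F f j"
proof -
  define q where "q = F m"
  define d where "d = k - j"
  have q01: "0 \<le> q" "q \<le> 1" using F_nonneg F_le1 by (auto simp: q_def)
  define H where "H u = (1-q)^d * gfun n j u - q^d * gfun n k u" for u
  define H' where "H' u = (1-q)^d * dg n j u - q^d * dg n k u" for u
  have D: "(H has_real_derivative H' u) (at u)" for u
    unfolding H_def H'_def by (intro DERIV_diff DERIV_cmult gfun_deriv)
  have C: "continuous_on UNIV H'" unfolding H'_def dg_def by (intro continuous_intros)
  have fact: "H u = u^(n-k) * (1-u)^(j-1) * (((1-q)*u)^d - (q*(1-u))^d)" for u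
  proof -
    have e1: "n - j = (n - k) + d" and e2: "k - 1 = (j - 1) + d" using jk by (auto simp: d_def)
    show ?thesis unfolding H_def gfun_def e1 e2 power_add power_mult_distrib by (simp add: algebra_simps)
  qed
  have Hp: "0 \<le> H u" if "F m \<le> u" "u \<le> 1" for u
  proof -
    have a: "0 \<le> q*(1-u)" using that q01 by (intro mult_nonneg_nonneg) auto
    have b: "q*(1-u) \<le> (1-q)*u" using that by (simp add: q_def algebra_simps)
    have "(q*(1-u))^d \<le> ((1-q)*u)^d" by (rule power_mono[OF b a])
    then show ?thesis unfolding fact using that q01 by (auto simp: q_def intro!: mult_nonneg_nonneg)
  qed
  have Hn: "H u \<le> 0" if "0 \<le> u" "u \<le> F m" for u
  proof -
    have a: "0 \<le> (1-q)*u" using that q01 by (intro mult_nonneg_nonneg) auto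
    have b: "(1-q)*u \<le> q*(1-u)" using that by (simp add: q_def algebra_simps)
    have "((1-q)*u)^d \<le> (q*(1-u))^d" by (rule power_mono[OF b a])
    moreover have "0 \<le> u^(n-k) * (1-u)^(j-1)" using that q01 by (auto simp: q_def)
    ultimately show ?thesis unfolding fact by (simp add: mult_nonpos_nonneg mult_le_0_iff)
  qed
  define J where "J r = (LINT t|lborel. dg n r (F t) * (f t)\<^sup>2)" for r
  have "0 \<le> (LINT t|lborel. H' (F t) * (f t)\<^sup>2)" by (rule SC[OF D C Hp Hn])
  also have "(LINT t|lborel. H' (F t) * (f t)\<^sup>2) = (1-q)^d * J j - q^d * J k"
  proof -
    have "(LINT t|lborel. H' (F t) * (f t)\<^sup>2) = (LINT t|lborel. (1-q)^d * (dg n j (F t) * (f t)\<^sup>2) - q^d * (dg n k (F t) * (f t)\<^sup>2))"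
      by (simp add: H'_def algebra_simps)
    also have "\<dots> = (1-q)^d * J j - q^d * J k"
      unfolding J_def by (subst Bochner_Integration.integral_diff) (auto intro: int_dg)
    finally show ?thesis .
  qed
  finally have ineq: "q^d * J k \<le> (1-q)^d * J j" by simp
  have Jk: "0 < J k" using bk unfolding beta_eq J_def by (simp add: zero_less_mult_iff)
  have d0: "0 < d" using jk by (simp add: d_def)
  have q1: "q < 1"
  proof (rule ccontr)
    assume "\<not> q < 1"
    then have "q = 1" using q01 by simp
    then show False using ineq Jk d0 by (simp add: zero_power)
  qed
  have "0 \<le> (1-q)^d * J j" using ineq Jk q01 by (smt (verit) mult_nonneg_nonneg zero_le_power)
  moreover have "0 < (1-q)^d" using q1 by simp
  ultimately have "0 \<le> J j" by (simp add: zero_le_mult_iff)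
  then show ?thesis unfolding beta_eq J_def by simp
qed

end


lemma Afun_w: "1 \<le> k \<Longrightarrow> 1 \<le> n \<Longrightarrow> Afun n F f k \<theta> = Bsum n F f k * ((1-\<theta>)/real k + 2*\<theta>/real n)"
  by (simp add: Afun_def field_simps)

lemma Bsum_split2: assumes "k1 \<le> k2" shows "Bsum n F f k2 = Bsum n F f k1 + (\<Sum>r\<in>{Suc k1..k2}. beta n F f r)"
proof -
  have "{1..k2} = {1..k1} \<union> {Suc k1..k2}" using assms by auto
  then have "Bsum n F f k2 = (\<Sum>r\<in>{1..k1} \<union> {Suc k1..k2}. beta n F f r)" by (simp add: Bsum_def)
  also have "\<dots> = Bsum n F f k1 + (\<Sum>r\<in>{Suc k1..k2}. beta n F f r)"
    by (subst sum.union_disjoint) (auto simp: Bsum_def)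
  finally show ?thesis .
qed

lemma w_pos: "0 \<le> \<theta> \<Longrightarrow> \<theta> \<le> 1 \<Longrightarrow> 1 \<le> k \<Longrightarrow> 1 \<le> n \<Longrightarrow> 0 < (1-\<theta>)/real k + 2*\<theta>/real n"
proof -
  assume a: "0 \<le> \<theta>" "\<theta> \<le> 1" "1 \<le> k" "1 \<le> n"
  show ?thesis
  proof (cases "\<theta> = 1")
    case True then show ?thesis using a by simp
  next
    case False
    then have "0 < (1-\<theta>)/real k" using a by simp
    moreover have "0 \<le> 2*\<theta>/real n" using a by simp
    ultimately show ?thesis by linarith
  qed
qed

lemma w_diff: "1 \<le> k \<Longrightarrow> 1 \<le> n \<Longrightarrow>
   ((1-t2)/real k + 2*t2/real n) - ((1-t1)/real k + 2*t1/real n) = (t2 - t1) * (2/real n - 1/real k)"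
  by (simp add: field_simps)

theorem corollary2:
  fixes n :: nat and F f :: "real \<Rightarrow> real"
    and c c' :: "real \<Rightarrow> real" and xbar :: real
    and xss :: "real \<Rightarrow> real" and r0 :: nat
  assumes n2: "2 \<le> n"
    and f_meas: "f \<in> borel_measurable lborel"
    and f_nonneg: "\<And>t. 0 \<le> f t"
    and f_int: "integrable lborel f"
    and f_total: "(LINT t|lborel. f t) = 1"
    and F_cdf: "\<And>x. F x = (LINT t:{..x}|lborel. f t)"
    and finite_ints: "\<And>r. r \<in> {1..n} \<Longrightarrow>
          integrable lborel (\<lambda>t. deriv (gfun n r) (F t) * (f t)\<^sup>2)"
    and f_unimodal: "unimodal_on UNIV f"
    and h_unimodal: "unimodal_on {t. F t < 1} (failure_rate F f)"
    and xbar_pos: "0 < xbar" and c_xbar: "c xbar = 1"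
    and c_deriv: "\<And>x. x \<in> {0..xbar} \<Longrightarrow> (c has_real_derivative c' x) (at x within {0..xbar})"
    and c_incr: "strict_mono_on {0..xbar} c"
    and c_convex: "strictly_convex_on {0..xbar} c"
    and c0: "c 0 = 0" and c'0: "c' 0 = 0"
    and r0_mem: "r0 \<in> {1..n-1}"
    and r0_max: "\<And>r. r \<in> {1..n-1} \<Longrightarrow> Bsum n F f r / real r \<le> Bsum n F f r0 / real r0"
    and xss_def: "\<And>\<theta>. \<theta> \<in> {0..1} \<Longrightarrow> xss \<theta> \<in> {0..xbar} \<and> c' (xss \<theta>) = Mstar n F f \<theta>"
  shows
    "(Max {r \<in> {1..n}. 0 < beta n F f r} \<le> n div 2 \<longrightarrow>
        antimono_on {0..1} (Mstar n F f) \<and> antimono_on {0..1} xss)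
     \<and> ((n + 1) div 2 < r0 \<longrightarrow>
        strict_mono_on {0..1} (Mstar n F f) \<and> strict_mono_on {0..1} xss)
     \<and> ((n + 1) div 2 < Max {r \<in> {1..n}. 0 < beta n F f r} \<longrightarrow>
        (\<exists>\<theta>b. 0 \<le> \<theta>b \<and> \<theta>b < 1 \<and>
           strict_mono_on {\<theta>b..1} (Mstar n F f) \<and> strict_mono_on {\<theta>b..1} xss))"
proof -
  obtain m where mu: "\<forall>x y. x \<le> y \<and> y \<le> m \<longrightarrow> f x \<le> f y" "\<forall>x y. m \<le> x \<and> x \<le> y \<longrightarrow> f y \<le> f x"
    using mode_exists[OF f_unimodal f_int f_nonneg f_total] by blast
  interpret D: dens f F m
    by unfold_locales (use f_meas f_nonneg f_int f_total F_cdf mu in auto)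
  obtain N where nN: "n = N + 2" using n2 by (metis add.commute le_add_diff_inverse)
  let ?b = "beta n F f" and ?B = "Bsum n F f" and ?A = "\<lambda>k \<theta>. Afun n F f k \<theta>" and ?M = "MA n F f"
  have n1: "1 \<le> n" using n2 by simp
  have Bn: "?B n = 0" using D.Bsum_n[of N] nN by simp
  have Bnn: "0 \<le> ?B k" if "k \<in> {1..n}" for k
  proof (cases "k = n")
    case True then show ?thesis using Bn by simp
  next
    case False then show ?thesis using that D.Bsum_nonneg[of k N] nN by simp
  qed
  have Mst: "Mstar n F f \<theta> = ?M \<theta>" for \<theta> using Mstar_eq[OF n1 Bn] .
  have Aw: "?A k \<theta> = ?B k * ((1-\<theta>)/real k + 2*\<theta>/real n)" if "k \<in> {1..n}" for k \<theta>
    using that n1 by (intro Afun_w) auto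
  have Mge: "?A k \<theta> \<le> ?M \<theta>" if "k \<in> {1..n}" for k \<theta>
    unfolding MA_def using that by (intro Max_ge) auto
  have Mex: "\<exists>k\<in>{1..n}. ?M \<theta> = ?A k \<theta>" for \<theta>
  proof -
    have "?M \<theta> \<in> (\<lambda>k. ?A k \<theta>) ` {1..n}" unfolding MA_def using n1 by (intro Max_in) auto
    then show ?thesis by auto
  qed
  have Adiff: "?A k t2 - ?A k t1 = ?B k * ((t2 - t1) * (2/real n - 1/real k))" if "k \<in> {1..n}" for k t1 t2
  proof -
    have "?A k t2 - ?A k t1 = ?B k * (((1-t2)/real k + 2*t2/real n) - ((1-t1)/real k + 2*t1/real n))"
      unfolding Aw[OF that] by (simp add: right_diff_distrib)
    also have "\<dots> = ?B k * ((t2 - t1) * (2/real n - 1/real k))" using w_diff[of k n t2 t1] that n1 by simp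
    finally show ?thesis .
  qed
  have step: "?M \<theta>1 < ?M \<theta>2" if th: "0 \<le> \<theta>1" "\<theta>1 < \<theta>2" "\<theta>2 \<le> 1"
    and k: "k \<in> {1..n}" "n < 2*k" "0 < ?B k" "?A k \<theta>1 = ?M \<theta>1" for \<theta>1 \<theta>2 k
  proof -
    have "1/real k < 2/real n" using k n1 by (simp add: field_simps)
    then have "0 < ?B k * ((\<theta>2 - \<theta>1) * (2/real n - 1/real k))" using th k by simp
    moreover have "?A k \<theta>2 - ?A k \<theta>1 = ?B k * ((\<theta>2 - \<theta>1) * (2/real n - 1/real k))" by (rule Adiff[OF k(1)])
    ultimately have "?A k \<theta>1 < ?A k \<theta>2" by linarith
    then show ?thesis using k(4) Mge[OF k(1), of \<theta>2] by simp
  qed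
  have cs: "c' x < c' y" if "x < y" "x \<in> {0..xbar}" "y \<in> {0..xbar}" for x y
    by (rule cprime_strict[OF c_deriv c_convex that])
  have xss_anti: "xss \<theta>2 \<le> xss \<theta>1" if "\<theta>1 \<in> {0..1}" "\<theta>2 \<in> {0..1}" "Mstar n F f \<theta>2 \<le> Mstar n F f \<theta>1" for \<theta>1 \<theta>2
  proof (rule ccontr)
    assume "\<not> ?thesis"
    then have lt: "xss \<theta>1 < xss \<theta>2" by simp
    have "c' (xss \<theta>1) < c' (xss \<theta>2)"
      by (rule cs[OF lt]) (use xss_def[OF that(1)] xss_def[OF that(2)] in auto)
    then show False using xss_def[OF that(1)] xss_def[OF that(2)] that(3) by simp
  qed
  have xss_str: "xss \<theta>1 < xss \<theta>2" if "\<theta>1 \<in> {0..1}" "\<theta>2 \<in> {0..1}" "Mstar n F f \<theta>1 < Mstar n F f \<theta>2" for \<theta>1 \<theta>2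
  proof (rule ccontr)
    assume "\<not> ?thesis"
    then have le: "xss \<theta>2 \<le> xss \<theta>1" by simp
    have "c' (xss \<theta>2) \<le> c' (xss \<theta>1)"
    proof (cases "xss \<theta>2 = xss \<theta>1")
      case True then show ?thesis by simp
    next
      case False
      then have lt: "xss \<theta>2 < xss \<theta>1" using le by simp
      have "c' (xss \<theta>2) < c' (xss \<theta>1)"
        by (rule cs[OF lt]) (use xss_def[OF that(1)] xss_def[OF that(2)] in auto)
      then show ?thesis by simp
    qed
    then show False using xss_def[OF that(1)] xss_def[OF that(2)] that(3) by simp
  qed
  have Br0: "0 < ?B r0"
  proof -
    obtain r where r: "r \<in> {1..N+1}" "0 < Bsum (N+2) F f r" using D.Bsum_some_pos by blast
    then have rr: "r \<in> {1..n-1}" "0 < ?B r" using nN by auto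
    then have "0 < ?B r / real r" by simp
    also have "\<dots> \<le> ?B r0 / real r0" by (rule r0_max[OF rr(1)])
    finally show ?thesis using r0_mem by (simp add: zero_less_divide_iff)
  qed
  define P where "P = {r\<in>{1..n}. 0 < ?b r}"
  have Pfin: "finite P" unfolding P_def by simp
  have Pne: "P \<noteq> {}"
  proof
    assume P0: "P = {}"
    have "\<forall>r\<in>{1..r0}. ?b r \<le> 0"
    proof
      fix r assume r: "r \<in> {1..r0}"
      show "?b r \<le> 0"
      proof (rule ccontr)
        assume "\<not> ?b r \<le> 0"
        then have "r \<in> P" using r r0_mem unfolding P_def by auto
        then show False using P0 by simp
      qed
    qed
    then have "?B r0 \<le> 0" unfolding Bsum_def by (intro sum_nonpos) auto
    then show False using Br0 by simp
  qed
  define rh where "rh = Max P"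
  have rhP: "rh \<in> P" unfolding rh_def by (rule Max_in[OF Pfin Pne])
  have rh1: "rh \<in> {1..n}" "0 < ?b rh" using rhP unfolding P_def by auto
  have after: "?b i \<le> 0" if "i \<in> {1..n}" "rh < i" for i
  proof (rule ccontr)
    assume "\<not> ?b i \<le> 0"
    then have "i \<in> P" using that unfolding P_def by auto
    then have "i \<le> rh" unfolding rh_def using Pfin by (intro Max_ge)
    then show False using that by simp
  qed
  have before: "0 \<le> ?b j" if "1 \<le> j" "j < rh" for j
    by (rule D.sc_beta[of j rh n]) (use that rh1 in auto)
  have rh_eq: "Max {r \<in> {1..n}. 0 < beta n F f r} = rh" unfolding rh_def P_def ..
  show ?thesis
  proof (rule conjI[OF impI conjI[OF impI impI]])
    assume hi: "Max {r \<in> {1..n}. 0 < beta n F f r} \<le> n div 2"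
    then have rhle: "rh \<le> n div 2" using rh_eq by simp
    define j0 where "j0 = n div 2"
    have j0: "j0 \<in> {1..n}" "2 * j0 \<le> n" "rh \<le> j0" using n2 rhle unfolding j0_def by auto
    have Bk: "?B k \<le> ?B j0" if "k \<in> {1..n}" "j0 \<le> k" for k
    proof -
      have "?B k = ?B j0 + (\<Sum>i\<in>{Suc j0..k}. ?b i)" by (rule Bsum_split2) (use that in simp)
      moreover have "(\<Sum>i\<in>{Suc j0..k}. ?b i) \<le> 0" using that j0 by (intro sum_nonpos after) auto
      ultimately show ?thesis by simp
    qed
    have anti: "?A k t2 \<le> ?A k t1" if "k \<in> {1..n}" "2*k \<le> n" "t1 \<le> t2" for k t1 t2
    proof -
      have "2/real n - 1/real k \<le> 0" using that n1 by (simp add: field_simps)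
      then have "(t2 - t1) * (2/real n - 1/real k) \<le> 0" using that(3) by (simp add: mult_nonneg_nonpos)
      then have "?B k * ((t2 - t1) * (2/real n - 1/real k)) \<le> 0" using Bnn[OF that(1)] by (simp add: mult_nonneg_nonpos)
      moreover have "?A k t2 - ?A k t1 = ?B k * ((t2 - t1) * (2/real n - 1/real k))" by (rule Adiff[OF that(1)])
      ultimately show ?thesis by linarith
    qed
    have dom: "?A k \<theta> \<le> ?A j0 \<theta>" if "k \<in> {1..n}" "j0 \<le> k" "0 \<le> \<theta>" "\<theta> \<le> 1" for k \<theta>
    proof -
      have "(1-\<theta>)/real k \<le> (1-\<theta>)/real j0" using that j0 by (intro divide_left_mono) auto
      then have w: "(1-\<theta>)/real k + 2*\<theta>/real n \<le> (1-\<theta>)/real j0 + 2*\<theta>/real n" by simp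
      have "?B k * ((1-\<theta>)/real k + 2*\<theta>/real n) \<le> ?B j0 * ((1-\<theta>)/real j0 + 2*\<theta>/real n)"
        using Bk[OF that(1,2)] w Bnn[OF j0(1)] w_pos[of \<theta> k n] that n1 by (intro mult_mono) auto
      then show ?thesis unfolding Aw[OF that(1)] Aw[OF j0(1)] .
    qed
    have Manti: "?M \<theta>2 \<le> ?M \<theta>1" if "\<theta>1 \<in> {0..1}" "\<theta>2 \<in> {0..1}" "\<theta>1 \<le> \<theta>2" for \<theta>1 \<theta>2
    proof -
      obtain k where k: "k \<in> {1..n}" "?M \<theta>2 = ?A k \<theta>2" using Mex by blast
      show ?thesis
      proof (cases "2*k \<le> n")
        case True then show ?thesis using k anti[OF k(1) True that(3)] Mge[OF k(1), of \<theta>1] by simp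
      next
        case False
        then have jk: "j0 \<le> k" unfolding j0_def by simp
        have "?A k \<theta>2 \<le> ?A j0 \<theta>2" using dom[OF k(1) jk] that by simp
        also have "\<dots> \<le> ?A j0 \<theta>1" using anti[OF j0(1) j0(2) that(3)] .
        also have "\<dots> \<le> ?M \<theta>1" using Mge[OF j0(1)] .
        finally show ?thesis using k by simp
      qed
    qed
    show "antimono_on {0..1} (Mstar n F f) \<and> antimono_on {0..1} xss"
    proof
      show "antimono_on {0..1} (Mstar n F f)"
        by (intro monotone_onI) (simp add: Mst Manti)
      show "antimono_on {0..1} xss"
        by (intro monotone_onI) (simp add: xss_anti Mst Manti)
    qed
  next
    assume "(n + 1) div 2 < r0"
    then have nr0: "n < 2 * r0" by presburger
    have r0n: "r0 \<in> {1..n}" using r0_mem by auto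
    have Mstr: "?M \<theta>1 < ?M \<theta>2" if th: "\<theta>1 \<in> {0..1}" "\<theta>2 \<in> {0..1}" "\<theta>1 < \<theta>2" for \<theta>1 \<theta>2
    proof -
      obtain k where k: "k \<in> {1..n}" "?M \<theta>1 = ?A k \<theta>1" using Mex by blast
      have wr0: "0 < (1-\<theta>1)/real r0 + 2*\<theta>1/real n" using w_pos[of \<theta>1 r0 n] th r0n n1 by simp
      have Ar0pos: "0 < ?A r0 \<theta>1" unfolding Aw[OF r0n] using Br0 wr0 by simp
      show ?thesis
      proof (cases "n < 2*k")
        case True
        have "0 < ?A k \<theta>1" using Ar0pos Mge[OF r0n, of \<theta>1] k by simp
        moreover have "0 < (1-\<theta>1)/real k + 2*\<theta>1/real n" using w_pos[of \<theta>1 k n] th k n1 by simp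
        ultimately have "0 < ?B k" unfolding Aw[OF k(1)] by (simp add: zero_less_mult_iff)
        then show ?thesis using step[of \<theta>1 \<theta>2 k] th k True by auto
      next
        case False
        have kn1: "k \<in> {1..n-1}" using False k n2 by auto
        have "(1-\<theta>1)/real k + 2*\<theta>1/real n \<le> 1/real k"
        proof -
          have "2/real n \<le> 1/real k" using False k n1 by (simp add: field_simps)
          then have "\<theta>1 * (2/real n) \<le> \<theta>1 * (1/real k)" using th by (intro mult_left_mono) auto
          moreover have "(1-\<theta>1)/real k = 1/real k - \<theta>1 * (1/real k)" by (simp add: diff_divide_distrib)
          moreover have "2*\<theta>1/real n = \<theta>1 * (2/real n)" by simp
          ultimately show ?thesis by linarith
        qed
        then have "?A k \<theta>1 \<le> ?B k * (1/real k)" unfolding Aw[OF k(1)] using Bnn[OF k(1)] by (intro mult_left_mono)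
        also have "\<dots> = ?B k / real k" by simp
        also have "\<dots> \<le> ?B r0 / real r0" by (rule r0_max[OF kn1])
        also have "\<dots> \<le> ?A r0 \<theta>1"
        proof -
          have "1/real r0 < 2/real n" using nr0 r0n n1 by (simp add: field_simps)
          then have "\<theta>1 * (1/real r0) \<le> \<theta>1 * (2/real n)" using th by (intro mult_left_mono) auto
          moreover have "(1-\<theta>1)/real r0 = 1/real r0 - \<theta>1 * (1/real r0)" by (simp add: diff_divide_distrib)
          moreover have "2*\<theta>1/real n = \<theta>1 * (2/real n)" by simp
          ultimately have "1/real r0 \<le> (1-\<theta>1)/real r0 + 2*\<theta>1/real n" by linarith
          then have "?B r0 * (1/real r0) \<le> ?B r0 * ((1-\<theta>1)/real r0 + 2*\<theta>1/real n)"
            using Br0 by (intro mult_left_mono) auto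
          then show ?thesis unfolding Aw[OF r0n] by simp
        qed
        finally have "?M \<theta>1 \<le> ?A r0 \<theta>1" using k by simp
        then have "?A r0 \<theta>1 = ?M \<theta>1" using Mge[OF r0n, of \<theta>1] by simp
        then show ?thesis using step[of \<theta>1 \<theta>2 r0] th r0n nr0 Br0 by auto
      qed
    qed
    show "strict_mono_on {0..1} (Mstar n F f) \<and> strict_mono_on {0..1} xss"
    proof
      show "strict_mono_on {0..1} (Mstar n F f)" by (intro strict_mono_onI) (simp add: Mst Mstr)
      show "strict_mono_on {0..1} xss" by (intro strict_mono_onI) (simp add: xss_str Mst Mstr)
    qed
  next
    assume "(n + 1) div 2 < Max {r \<in> {1..n}. 0 < beta n F f r}"
    then have "(n + 1) div 2 < rh" using rh_eq by simp
    then have nrh: "n < 2 * rh" by presburger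
    define S where "S = {j\<in>{1..n}. 2*j \<le> n}"
    have Sfin: "finite S" unfolding S_def by simp
    have S1: "1 \<in> S" using n2 unfolding S_def by simp
    have Sn: "j \<in> {1..n}" if "j \<in> S" for j using that unfolding S_def by simp
    have jlt: "j < rh" if "j \<in> S" for j using that nrh unfolding S_def by simp
    have Bjlt: "?B j < ?B rh" if "j \<in> S" for j
    proof -
      have "?B rh = ?B j + (\<Sum>i\<in>{Suc j..rh}. ?b i)" by (rule Bsum_split2) (use jlt[OF that] in simp)
      moreover have "?b rh \<le> (\<Sum>i\<in>{Suc j..rh}. ?b i)"
      proof (rule member_le_sum)
        show "rh \<in> {Suc j..rh}" using jlt[OF that] by simp
        fix x assume "x \<in> {Suc j..rh} - {rh}"
        then show "0 \<le> ?b x" by (intro before) auto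
      qed simp
      ultimately show ?thesis using rh1 by simp
    qed
    have Brh: "0 < ?B rh" using Bjlt[OF S1] Bnn[of 1] n1 by simp
    define \<delta> where "\<delta> = Min ((\<lambda>j. ?B rh - ?B j) ` S)"
    have \<delta>pos: "0 < \<delta>" unfolding \<delta>_def using Sfin S1 Bjlt by (subst Min_gr_iff) auto
    have \<delta>le: "\<delta> \<le> ?B rh - ?B j" if "j \<in> S" for j unfolding \<delta>_def using Sfin that by (intro Min_le) auto
    define \<beta> where "\<beta> = (\<Sum>j\<in>S. ?B j / real j)"
    have \<beta>ge: "?B j / real j \<le> \<beta>" if "j \<in> S" for j
      unfolding \<beta>_def using Sfin that Bnn Sn by (intro member_le_sum) auto
    have \<beta>0: "0 \<le> \<beta>" unfolding \<beta>_def using Bnn Sn by (intro sum_nonneg) auto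
    define a where "a = 2*\<delta>/real n"
    have a0: "0 < a" unfolding a_def using \<delta>pos n1 by simp
    define \<theta>b where "\<theta>b = (2*\<beta> + a) / (2*(a + \<beta>))"
    have \<theta>b0: "0 \<le> \<theta>b" unfolding \<theta>b_def using a0 \<beta>0 by simp
    have \<theta>b1: "\<theta>b < 1" unfolding \<theta>b_def using a0 \<beta>0 by (simp add: field_simps)
    have beat: "?A j \<theta> < ?A rh \<theta>" if j: "j \<in> S" and th: "\<theta>b \<le> \<theta>" "\<theta> \<le> 1" for j \<theta>
    proof -
      have jn: "j \<in> {1..n}" using Sn[OF j] .
      have e: "?A rh \<theta> - ?A j \<theta> = (1-\<theta>) * (?B rh / real rh - ?B j / real j) + \<theta> * (2 * (?B rh - ?B j) / real n)"
        unfolding Aw[OF rh1(1)] Aw[OF jn] by (simp add: algebra_simps add_divide_distrib diff_divide_distrib)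
      have t1: "(1-\<theta>) * (- \<beta>) \<le> (1-\<theta>) * (?B rh / real rh - ?B j / real j)"
      proof (rule mult_left_mono)
        have "0 \<le> ?B rh / real rh" using Brh by simp
        then show "- \<beta> \<le> ?B rh / real rh - ?B j / real j" using \<beta>ge[OF j] by simp
      qed (use th in simp)
      have t2: "\<theta> * a \<le> \<theta> * (2 * (?B rh - ?B j) / real n)"
      proof (rule mult_left_mono)
        show "a \<le> 2 * (?B rh - ?B j) / real n" unfolding a_def using \<delta>le[OF j] n1 by (intro divide_right_mono) auto
      qed (use th \<theta>b0 in simp)
      have t3: "(1-\<theta>) * \<beta> < \<theta> * a"
      proof -
        have "\<theta>b * (a + \<beta>) \<le> \<theta> * (a + \<beta>)" using th a0 \<beta>0 by (intro mult_right_mono) auto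
        moreover have "\<theta>b * (a + \<beta>) = (2*\<beta> + a) / 2" unfolding \<theta>b_def using a0 \<beta>0 by (simp add: field_simps)
        ultimately have "(2*\<beta> + a) / 2 \<le> \<theta> * (a + \<beta>)" by simp
        then show ?thesis using a0 by (simp add: algebra_simps)
      qed
      show ?thesis using e t1 t2 t3 by (simp add: algebra_simps)
    qed
    have Mstr: "?M \<theta>1 < ?M \<theta>2" if th: "\<theta>1 \<in> {\<theta>b..1}" "\<theta>2 \<in> {\<theta>b..1}" "\<theta>1 < \<theta>2" for \<theta>1 \<theta>2
    proof -
      obtain k where k: "k \<in> {1..n}" "?M \<theta>1 = ?A k \<theta>1" using Mex by blast
      have kS: "k \<notin> S"
      proof
        assume "k \<in> S"
        then have "?A k \<theta>1 < ?A rh \<theta>1" using beat th by auto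
        then show False using k Mge[OF rh1(1), of \<theta>1] by simp
      qed
      then have nk: "n < 2*k" using k unfolding S_def by auto
      have "0 < ?A rh \<theta>1" unfolding Aw[OF rh1(1)] using Brh w_pos[of \<theta>1 rh n] th \<theta>b0 rh1 n1 by simp
      then have "0 < ?A k \<theta>1" using k Mge[OF rh1(1), of \<theta>1] by simp
      moreover have "0 < (1-\<theta>1)/real k + 2*\<theta>1/real n" using w_pos[of \<theta>1 k n] th \<theta>b0 k n1 by simp
      ultimately have "0 < ?B k" unfolding Aw[OF k(1)] by (simp add: zero_less_mult_iff)
      then show ?thesis using step[of \<theta>1 \<theta>2 k] th \<theta>b0 k nk by auto
    qed
    show "\<exists>\<theta>b. 0 \<le> \<theta>b \<and> \<theta>b < 1 \<and> strict_mono_on {\<theta>b..1} (Mstar n F f) \<and> strict_mono_on {\<theta>b..1} xss"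
    proof (intro exI conjI)
      show "0 \<le> \<theta>b" by (rule \<theta>b0)
      show "\<theta>b < 1" by (rule \<theta>b1)
      show "strict_mono_on {\<theta>b..1} (Mstar n F f)" by (intro strict_mono_onI) (simp add: Mst Mstr)
      show "strict_mono_on {\<theta>b..1} xss"
        by (intro strict_mono_onI) (use \<theta>b0 in \<open>auto intro!: xss_str simp: Mst Mstr\<close>)
    qed
  qed
qed


end
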